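(* For every integer $d\ge2$, the infinite $d$-regular tree rooted at a vertex $o$ is Hamiltonian: it admits an invariant line ensemble $L$ with $\mathbb P(o\in L)=1$.
   Context: A line ensemble of $G=(V,E)$ is a symmetric $L:V^2\to\{0,1\}$ with $L(u,u)=0$, $L(u,v)=0$ unless $\{u,v\}\in E$, and $\sum_uL(u,v)\in\{0,2\}$ for all $v$; $v\in L$ means $\sum_uL(u,v)=2$. For a unimodular random rooted graph $(G,o)$, an invariant line ensemble is a random line ensemble $L$, defined on an enlarged probability space, such that the weighted rooted graph $(G,L,o)$ is unimodular, i.e. $\mathbb E\sum_vf(G,L,o,v)=\mathbb E\sum_vf(G,L,v,o)$ for all nonnegative measurable $f$ of isomorphism classes of doubly rooted weighted graphs. *)

theory Defs
  imports "HOL-Probability.Probability"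
begin

text \<open>The infinite d-regular tree, realised as the Cayley graph of the free product
of d copies of Z/2: vertices are reduced words over the alphabet {0..<d}
(no two consecutive letters equal), and w is adjacent to w@[a] for every admissible a.\<close>

definition tree_verts :: "nat \<Rightarrow> nat list set" where
  "tree_verts d = {w. (\<forall>x\<in>set w. x < d) \<and> (\<forall>i. Suc i < length w \<longrightarrow> w ! i \<noteq> w ! Suc i)}"

definition tree_adj :: "nat \<Rightarrow> nat list \<Rightarrow> nat list \<Rightarrow> bool" where
  "tree_adj d u v \<longleftrightarrow> u \<in> tree_verts d \<and> v \<in> tree_verts d \<and>
     ((\<exists>a. v = u @ [a]) \<or> (\<exists>a. u = v @ [a]))"

definition tree_aut :: "nat \<Rightarrow> (nat list \<Rightarrow> nat list) set" where
  "tree_aut d = {\<phi>. bij_betw \<phi> (tree_verts d) (tree_verts d) \<and>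
      (\<forall>u\<in>tree_verts d. \<forall>v\<in>tree_verts d. tree_adj d (\<phi> u) (\<phi> v) \<longleftrightarrow> tree_adj d u v)}"

text \<open>Line ensembles: L(u,v) = True encodes L(u,v) = 1.\<close>
definition line_ensemble :: "nat \<Rightarrow> (nat list \<times> nat list \<Rightarrow> bool) \<Rightarrow> bool" where
  "line_ensemble d L \<longleftrightarrow>
     (\<forall>u v. L (u, v) = L (v, u)) \<and> (\<forall>u. \<not> L (u, u)) \<and>
     (\<forall>u v. L (u, v) \<longrightarrow> tree_adj d u v) \<and>
     (\<forall>v. card {u. L (u, v)} \<in> {0, 2})"

definition in_line_ensemble :: "nat list \<Rightarrow> (nat list \<times> nat list \<Rightarrow> bool) \<Rightarrow> bool" where
  "in_line_ensemble v L \<longleftrightarrow> card {u. L (u, v)} = 2"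

definition LE_space :: "(nat list \<times> nat list \<Rightarrow> bool) measure" where
  "LE_space = PiM UNIV (\<lambda>_. count_space UNIV)"

text \<open>f is a function of the isomorphism class of the doubly rooted weighted graph
(T_d, L, u, v): it is invariant under relabelling by tree automorphisms
(and hence only sees L on pairs of tree vertices).\<close>
definition iso_invariant :: "nat \<Rightarrow> ((nat list \<times> nat list \<Rightarrow> bool) \<Rightarrow> nat list \<Rightarrow> nat list \<Rightarrow> ennreal) \<Rightarrow> bool" where
  "iso_invariant d f \<longleftrightarrow>
     (\<forall>\<phi>\<in>tree_aut d. \<forall>L L' u v. u \<in> tree_verts d \<longrightarrow> v \<in> tree_verts d \<longrightarrow>
        (\<forall>a\<in>tree_verts d. \<forall>b\<in>tree_verts d. L' (\<phi> a, \<phi> b) = L (a, b)) \<longrightarrow>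
        f L' (\<phi> u) (\<phi> v) = f L u v)"

text \<open>The law M of a random line ensemble L makes (T_d, L, o) unimodular
(mass transport principle for all nonnegative measurable isomorphism-invariant f).\<close>
definition unimodular_LE :: "nat \<Rightarrow> nat list \<Rightarrow> (nat list \<times> nat list \<Rightarrow> bool) measure \<Rightarrow> bool" where
  "unimodular_LE d r M \<longleftrightarrow>
     (\<forall>f. iso_invariant d f \<longrightarrow> (\<forall>u v. (\<lambda>L. f L u v) \<in> borel_measurable LE_space) \<longrightarrow>
        (\<integral>\<^sup>+ L. (\<integral>\<^sup>+ v. f L r v \<partial>count_space (tree_verts d)) \<partial>M) = (\<integral>\<^sup>+ L. (\<integral>\<^sup>+ v. f L v r \<partial>count_space (tree_verts d)) \<partial>M))"

end

theory Submission imports Defs begin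


lemma V_iff: "w \<in> tree_verts d \<longleftrightarrow> (\<forall>x\<in>set w. x < d) \<and> distinct_adj w"
  by (simp add: tree_verts_def distinct_adj_conv_nth)

lemma meas_eq: "Measurable.pred LE_space (\<lambda>L. L i = c)"
  unfolding LE_space_def by measurable

lemma meas_single: "Measurable.pred LE_space (\<lambda>L. L = L0)"
proof -
  have "(\<lambda>L. L = L0) = (\<lambda>L. \<forall>i. L i = L0 i)" by (auto simp: fun_eq_iff)
  then show ?thesis using meas_eq by simp
qed

lemma meas_card: "Measurable.pred LE_space (\<lambda>L. card {u. L (u, r)} = 2)"
proof -
  have e: "(\<lambda>L. card {u. L (u, r)} = 2) = (\<lambda>L. \<exists>a b. a \<noteq> b \<and> (\<forall>u. L (u,r) = (u = a \<or> u = b)))"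
    by (auto simp: fun_eq_iff card_2_iff)
  moreover have m: "Measurable.pred LE_space (\<lambda>L. \<exists>a b. a \<noteq> b \<and> (\<forall>u. L (u,r) = (u = a \<or> u = b)))"
    by (intro pred_intros_countable allI pred_intros_logic meas_eq) auto
  show ?thesis by (subst e) (rule m)
qed


definition lstep :: "nat \<Rightarrow> nat list \<Rightarrow> nat list" where
  "lstep a w = (if w \<noteq> [] \<and> hd w = a then tl w else a # w)"

definition Lm :: "nat list \<Rightarrow> nat list \<Rightarrow> nat list" where
  "Lm g = foldr lstep g"

definition L0 :: "nat \<Rightarrow> nat list \<times> nat list \<Rightarrow> bool" where
  "L0 d = (\<lambda>(u,v). tree_adj d u v \<and> (\<exists>a\<in>{0,1}. v = u@[a] \<or> u = v@[a]))"

lemma V_Cons: "a#w \<in> tree_verts d \<longleftrightarrow> a < d \<and> w \<in> tree_verts d \<and> (w = [] \<or> hd w \<noteq> a)"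
  by (cases w) (auto simp: V_iff)

lemma V_tl: "w \<in> tree_verts d \<Longrightarrow> tl w \<in> tree_verts d"
  by (cases w) (auto simp: V_Cons)

lemma V_rev: "rev w \<in> tree_verts d \<longleftrightarrow> w \<in> tree_verts d"
  by (auto simp: V_iff)

lemma lstep_V: "a < d \<Longrightarrow> w \<in> tree_verts d \<Longrightarrow> lstep a w \<in> tree_verts d"
  by (auto simp: lstep_def V_tl V_Cons)

lemma lstep_inv: "w \<in> tree_verts d \<Longrightarrow> lstep a (lstep a w) = w"
  by (cases w) (auto simp: lstep_def V_Cons)

lemma lstep_E:
  assumes "\<exists>a\<in>A. v = u@[a] \<or> u = v@[a]"
  shows "\<exists>a\<in>A. lstep b v = lstep b u @[a] \<or> lstep b u = lstep b v @[a]"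
proof -
  have *: "\<exists>a\<in>A. lstep b v = lstep b u @[a] \<or> lstep b u = lstep b v @[a]"
    if "c \<in> A" "v = u @ [c]" for u v c
  proof (cases u)
    case Nil then show ?thesis using that by (cases "c = b") (auto simp: lstep_def)
  next
    case (Cons x y) then show ?thesis using that by (auto simp: lstep_def)
  qed
  from assms obtain c where "c \<in> A" "v = u@[c] \<or> u = v@[c]" by blast
  then show ?thesis using *[of c v u] *[of c u v] by blast
qed

lemma tree_adj_alt: "tree_adj d u v \<longleftrightarrow> u \<in> tree_verts d \<and> v \<in> tree_verts d \<and> (\<exists>a\<in>UNIV. v = u@[a] \<or> u = v@[a])"
  by (auto simp: tree_adj_def)

definition good :: "nat \<Rightarrow> (nat list \<Rightarrow> nat list) \<Rightarrow> bool" where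
  "good d \<phi> \<longleftrightarrow> \<phi> \<in> tree_aut d \<and> (\<forall>a\<in>tree_verts d. \<forall>b\<in>tree_verts d. L0 d (\<phi> a, \<phi> b) = L0 d (a, b))"

lemma good_id: "good d id"
  by (auto simp: good_def tree_aut_def)

lemma good_comp: "good d f \<Longrightarrow> good d g \<Longrightarrow> good d (f \<circ> g)"
proof -
  assume f: "good d f" and g: "good d g"
  have bf: "bij_betw f (tree_verts d) (tree_verts d)" and bg: "bij_betw g (tree_verts d) (tree_verts d)"
    using f g by (auto simp: good_def tree_aut_def)
  have gin: "\<And>x. x \<in> tree_verts d \<Longrightarrow> g x \<in> tree_verts d" using bg by (auto simp: bij_betw_def)
  show ?thesis using f g gin bij_betw_trans[OF bg bf] unfolding good_def tree_aut_def by auto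
qed

lemma lstep_bij: "b < d \<Longrightarrow> bij_betw (lstep b) (tree_verts d) (tree_verts d)"
  by (rule bij_betw_byWitness[where f'="lstep b"]) (auto simp: lstep_inv lstep_V)

lemma good_lstep: assumes "b < d" shows "good d (lstep b)"
proof -
  have fw1: "tree_adj d (lstep b u) (lstep b v)" if "tree_adj d u v" for u v
    using that lstep_E[of UNIV v u b] lstep_V[OF assms] unfolding tree_adj_alt by blast
  have fw2: "L0 d (lstep b u, lstep b v)" if "L0 d (u, v)" for u v
    using that fw1 lstep_E[of "{0,1}" v u b] unfolding L0_def by auto
  have a1: "tree_adj d (lstep b u) (lstep b v) = tree_adj d u v" if "u \<in> tree_verts d" "v \<in> tree_verts d" for u v
    using fw1 fw1[of "lstep b u" "lstep b v"] lstep_inv that by metis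
  have a2: "L0 d (lstep b u, lstep b v) = L0 d (u, v)" if "u \<in> tree_verts d" "v \<in> tree_verts d" for u v
    using fw2 fw2[of "lstep b u" "lstep b v"] lstep_inv that by metis
  show ?thesis using a1 a2 lstep_bij[OF assms] by (auto simp: good_def tree_aut_def)
qed

lemma good_Lm: "\<forall>x\<in>set g. x < d \<Longrightarrow> good d (Lm g)"
proof (induction g)
  case Nil then show ?case using good_id by (simp add: Lm_def id_def)
next
  case (Cons a g)
  have e: "Lm (a#g) = lstep a \<circ> Lm g" by (simp add: Lm_def fun_eq_iff)
  have "good d (lstep a \<circ> Lm g)" using Cons good_comp good_lstep by simp
  then show ?case by (subst e)
qed

lemma Lm_rev_self: "Lm (rev w) w = []"
proof (induction w)
  case Nil then show ?case by (simp add: Lm_def)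
next
  case (Cons a w)
  then show ?case by (simp add: Lm_def lstep_def)
qed

lemma Lm_nil: "w \<in> tree_verts d \<Longrightarrow> Lm w [] = w"
proof (induction w)
  case Nil then show ?case by (simp add: Lm_def)
next
  case (Cons a w)
  then have "Lm w [] = w" by (simp add: V_Cons)
  then show ?case using Cons.prems by (auto simp: Lm_def lstep_def V_Cons)
qed

lemma good_bij: "good d \<phi> \<Longrightarrow> bij_betw \<phi> (tree_verts d) (tree_verts d)"
  by (simp add: good_def tree_aut_def)



definition rstep :: "nat list \<Rightarrow> nat \<Rightarrow> nat list" where
  "rstep v a = (if v \<noteq> [] \<and> last v = a then butlast v else v @ [a])"

lemma V_snoc: "u@[a] \<in> tree_verts d \<longleftrightarrow> a < d \<and> u \<in> tree_verts d \<and> (u = [] \<or> last u \<noteq> a)"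
proof -
  have "u@[a] \<in> tree_verts d \<longleftrightarrow> a # rev u \<in> tree_verts d" using V_rev[of "u@[a]" d] by simp
  also have "\<dots> \<longleftrightarrow> a < d \<and> u \<in> tree_verts d \<and> (u = [] \<or> last u \<noteq> a)"
    by (simp add: V_Cons V_rev hd_rev)
  finally show ?thesis .
qed

lemma nb_char:
  assumes v: "v \<in> tree_verts d" and a: "a < d"
  shows "(u \<in> tree_verts d \<and> (v = u@[a] \<or> u = v@[a])) \<longleftrightarrow> u = rstep v a"
proof
  assume h: "u \<in> tree_verts d \<and> (v = u@[a] \<or> u = v@[a])"
  then show "u = rstep v a"
  proof (cases "v = u@[a]")
    case True then show ?thesis by (simp add: rstep_def)
  next
    case False
    then have u: "u = v@[a]" using h by auto
    then have "v = [] \<or> last v \<noteq> a" using h V_snoc by auto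
    then show ?thesis using u by (auto simp: rstep_def)
  qed
next
  assume u: "u = rstep v a"
  show "u \<in> tree_verts d \<and> (v = u@[a] \<or> u = v@[a])"
  proof (cases "v \<noteq> [] \<and> last v = a")
    case True
    then have "v = butlast v @ [a]" by (metis append_butlast_last_id)
    then show ?thesis using True u v V_snoc[of "butlast v" a d] by (auto simp: rstep_def)
  next
    case False
    then show ?thesis using u v a V_snoc[of v a d] by (auto simp: rstep_def)
  qed
qed

lemma L0_nb:
  assumes v: "v \<in> tree_verts d" and d: "d \<ge> 2"
  shows "{u. L0 d (u, v)} = {rstep v 0, rstep v 1}"
proof -
  have "L0 d (u, v) \<longleftrightarrow> (\<exists>a\<in>{0,1}. u \<in> tree_verts d \<and> (v = u@[a] \<or> u = v@[a]))" for u
    using v unfolding L0_def tree_adj_def by auto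
  also have "\<dots> u \<longleftrightarrow> (\<exists>a\<in>{0::nat,1}. u = rstep v a)" for u
    using nb_char[OF v, of 0 u] nb_char[OF v, of 1 u] d by auto
  finally show ?thesis by auto
qed

lemma rstep_ne: "rstep v 0 \<noteq> rstep v 1"
  by (cases "v = []") (auto simp: rstep_def dest: arg_cong[of _ _ length])

lemma L0_LE: assumes "d \<ge> 2" shows "line_ensemble d (L0 d)"
proof -
  have "card {u. L0 d (u, v)} \<in> {0, 2}" for v
  proof (cases "v \<in> tree_verts d")
    case True then show ?thesis using L0_nb[OF True assms] rstep_ne[of v] by simp
  next
    case False
    then have "{u. L0 d (u, v)} = {}" by (auto simp: L0_def tree_adj_def)
    then show ?thesis by simp
  qed
  moreover have "L0 d (u,v) = L0 d (v,u)" for u v by (auto simp: L0_def tree_adj_def)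
  moreover have "\<not> L0 d (u,u)" for u by (auto simp: L0_def)
  moreover have "L0 d (u,v) \<Longrightarrow> tree_adj d u v" for u v by (auto simp: L0_def)
  ultimately show ?thesis unfolding line_ensemble_def by blast
qed

lemma L0_in: assumes "d \<ge> 2" "r \<in> tree_verts d" shows "in_line_ensemble r (L0 d)"
  using L0_nb[OF assms(2,1)] rstep_ne[of r] by (simp add: in_line_ensemble_def)

lemma space_LE: "space LE_space = UNIV"
  by (simp add: LE_space_def space_PiM)

lemma sets_card: "{L \<in> space LE_space. in_line_ensemble r L} \<in> sets LE_space"
  using meas_card[of r] unfolding in_line_ensemble_def by measurable



lemma int_return:
  "(\<integral>\<^sup>+ L. g L \<partial>return LE_space L1) = g L1"
proof -
  have "AE L in return LE_space L1. L = L1"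
    by (subst AE_return) (auto simp: space_LE intro: meas_single)
  then have "AE L in return LE_space L1. g L = g L1" by auto
  then have "(\<integral>\<^sup>+ L. g L \<partial>return LE_space L1) = (\<integral>\<^sup>+ L. g L1 \<partial>return LE_space L1)"
    by (rule nn_integral_cong_AE)
  also have "\<dots> = g L1"
    using prob_space.emeasure_space_1[OF prob_space_return[of L1 LE_space]] by (simp add: space_LE)
  finally show ?thesis .
qed

lemma mtp:
  assumes f: "iso_invariant d f" and r: "r \<in> tree_verts d"
  shows "(\<integral>\<^sup>+ v. f (L0 d) r v \<partial>count_space (tree_verts d)) = (\<integral>\<^sup>+ v. f (L0 d) v r \<partial>count_space (tree_verts d))"
proof -
  let ?V = "tree_verts d"
  let ?L = "L0 d"
  have inv: "f ?L (\<phi> u) (\<phi> v) = f ?L u v" if "good d \<phi>" "u \<in> ?V" "v \<in> ?V" for \<phi> u v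
    using f that unfolding iso_invariant_def good_def by blast
  have lt: "\<forall>x\<in>set g. x < d" if "g \<in> ?V" for g using that by (simp add: V_iff)
  define \<psi> where "\<psi> = Lm (rev r)"
  have g\<psi>: "good d \<psi>" unfolding \<psi>_def using lt[OF r] by (intro good_Lm) simp
  have \<psi>r: "\<psi> r = []" by (simp add: \<psi>_def Lm_rev_self)
  have nilV: "[] \<in> ?V" by (simp add: V_iff)
  have "(\<integral>\<^sup>+ v. f ?L r v \<partial>count_space ?V) = (\<integral>\<^sup>+ v. f ?L [] (\<psi> v) \<partial>count_space ?V)"
    using inv[OF g\<psi> r] \<psi>r by (intro nn_integral_cong) auto
  also have "\<dots> = (\<integral>\<^sup>+ u. f ?L [] u \<partial>count_space ?V)"
    by (rule nn_integral_bij_count_space[OF good_bij[OF g\<psi>]])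
  also have "\<dots> = (\<integral>\<^sup>+ u. f ?L (rev u) [] \<partial>count_space ?V)"
  proof (intro nn_integral_cong)
    fix u assume "u \<in> space (count_space ?V)"
    then have u: "u \<in> ?V" by simp
    have gu: "good d (Lm (rev u))" using lt[OF u] by (intro good_Lm) simp
    have "f ?L (Lm (rev u) []) (Lm (rev u) u) = f ?L [] u" by (rule inv[OF gu nilV u])
    moreover have "Lm (rev u) [] = rev u" using u by (intro Lm_nil) (simp add: V_rev)
    ultimately show "f ?L [] u = f ?L (rev u) []" by (simp add: Lm_rev_self)
  qed
  also have "\<dots> = (\<integral>\<^sup>+ u. f ?L u [] \<partial>count_space ?V)"
    by (rule nn_integral_bij_count_space)
       (rule bij_betw_byWitness[where f'=rev]; auto simp: V_rev)
  also have "\<dots> = (\<integral>\<^sup>+ u. f ?L (\<psi> u) [] \<partial>count_space ?V)"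
    by (rule nn_integral_bij_count_space[OF good_bij[OF g\<psi>], symmetric])
  also have "\<dots> = (\<integral>\<^sup>+ u. f ?L u r \<partial>count_space ?V)"
    using inv[OF g\<psi> _ r] \<psi>r by (intro nn_integral_cong) auto
  finally show ?thesis .
qed

theorem lemma5p1:
  fixes d :: nat and r :: "nat list"
  assumes "d \<ge> 2" and "r \<in> tree_verts d"
  shows "\<exists>M. prob_space M \<and> sets M = sets LE_space \<and>
           (AE L in M. line_ensemble d L) \<and>
           unimodular_LE d r M \<and>
           measure M {L \<in> space M. in_line_ensemble r L} = 1"
proof (intro exI conjI)
  let ?M = "return LE_space (L0 d)"
  show "prob_space ?M" by (rule prob_space_return) (simp add: space_LE)
  show "sets ?M = sets LE_space" by simp
  have ae: "AE L in ?M. L = L0 d"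
    by (subst AE_return) (auto simp: space_LE intro: meas_single)
  show "AE L in ?M. line_ensemble d L"
    using ae by eventually_elim (simp add: L0_LE assms)
  show "unimodular_LE d r ?M"
    unfolding unimodular_LE_def int_return using mtp assms(2) by blast
  show "measure ?M {L \<in> space ?M. in_line_ensemble r L} = 1"
    using measure_return[OF sets_card[of r], of "L0 d"] L0_in[OF assms] by (simp add: space_LE)
qed
end
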